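(* Let $d\ge2$, $\omega=e^{2\pi\mathrm{i}/d}$, $\omega^x=e^{2\pi\mathrm{i}x/d}$ for real $x$, and $a_k=\frac{1-\mathrm{i}}{2}\omega^{k/4}$ for $k=1,\dots,d-1$. Let $B_1,B_2$ be unitary operators on a finite-dimensional Hilbert space whose eigenvalues lie in $\{\omega^l: l=0,\dots,d-1\}$. Define, for $k=1,\dots,d-1$, $$C_1^{(k)}=a_kB_1^{-k}+a_k^*\omega^kB_2^{-k},\qquad C_2^{(k)}=a_k^*B_1^{-k}+a_kB_2^{-k}.$$ Suppose that for $i=1,2$ and all $k=1,\dots,d-1$: $C_i^{(k)}=\big[C_i^{(1)}\big]^k$ and $C_i^{(d-k)}C_i^{(k)}=\mathbb{1}$. Then for every positive integer $n<d$ dividing $d$, $\operatorname{Tr}(B_1^n)=\operatorname{Tr}(B_2^n)=0$. *)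

theory Defs
  imports "HOL-Analysis.Analysis"
begin

text \<open>Operators on a finite-dimensional complex Hilbert space are represented as
  square complex matrices indexed by a finite type.\<close>

fun mpow :: "complex^'n^'n \<Rightarrow> nat \<Rightarrow> complex^'n^'n" where
  "mpow A 0 = mat 1"
| "mpow A (Suc k) = A ** mpow A k"

definition cadjoint :: "complex^'n^'n \<Rightarrow> complex^'n^'n" where
  "cadjoint A = (\<chi> i j. cnj (A $ j $ i))"

definition unitary_mat :: "complex^'n^'n \<Rightarrow> bool" where
  "unitary_mat U \<longleftrightarrow> U ** cadjoint U = mat 1 \<and> cadjoint U ** U = mat 1"

definition is_eigenvalue :: "complex^'n^'n \<Rightarrow> complex \<Rightarrow> bool" where
  "is_eigenvalue A c \<longleftrightarrow> (\<exists>v. v \<noteq> 0 \<and> A *v v = c *s v)"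

definition cscale :: "complex \<Rightarrow> complex^'n^'n \<Rightarrow> complex^'n^'n" where
  "cscale c A = (\<chi> i j. c * A $ i $ j)"

definition omega_pow :: "nat \<Rightarrow> real \<Rightarrow> complex" where
  "omega_pow d x = exp (2 * of_real pi * \<i> * of_real x / of_nat d)"

definition acoef :: "nat \<Rightarrow> nat \<Rightarrow> complex" where
  "acoef d k = (1 - \<i>) / 2 * omega_pow d (real k / 4)"

definition Cop1 :: "nat \<Rightarrow> complex^'n^'n \<Rightarrow> complex^'n^'n \<Rightarrow> nat \<Rightarrow> complex^'n^'n" where
  "Cop1 d B1 B2 k = cscale (acoef d k) (mpow (matrix_inv B1) k)
     + cscale (cnj (acoef d k) * omega_pow d (real k)) (mpow (matrix_inv B2) k)"

definition Cop2 :: "nat \<Rightarrow> complex^'n^'n \<Rightarrow> complex^'n^'n \<Rightarrow> nat \<Rightarrow> complex^'n^'n" where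
  "Cop2 d B1 B2 k = cscale (cnj (acoef d k)) (mpow (matrix_inv B1) k)
     + cscale (acoef d k) (mpow (matrix_inv B2) k)"

end

theory Submission
  imports Defs
begin


typedef ('n::finite) cm = "UNIV :: (complex^'n^'n) set" by auto
setup_lifting type_definition_cm

lemma zero_ne_mat1: "(0::complex^'n::finite^'n) \<noteq> mat 1"
proof
  assume h: "(0::complex^'n^'n) = mat 1"
  have "(0::complex^'n^'n) $ undefined $ undefined = (mat 1::complex^'n^'n) $ undefined $ undefined"
    by (simp only: h)
  thus False by (simp add: mat_def)
qed

instantiation cm :: (finite) ring_1
begin
lift_definition zero_cm :: "'a cm" is "0" .
lift_definition one_cm :: "'a cm" is "mat 1" .
lift_definition plus_cm :: "'a cm \<Rightarrow> 'a cm \<Rightarrow> 'a cm" is "(+)" .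
lift_definition minus_cm :: "'a cm \<Rightarrow> 'a cm \<Rightarrow> 'a cm" is "(-)" .
lift_definition uminus_cm :: "'a cm \<Rightarrow> 'a cm" is "uminus" .
lift_definition times_cm :: "'a cm \<Rightarrow> 'a cm \<Rightarrow> 'a cm" is "(**)" .
instance
proof
  fix a b c :: "'a cm"
  show "a * b * c = a * (b * c)" by transfer (simp add: matrix_mul_assoc)
  show "a + b + c = a + (b + c)" by transfer (simp add: add.assoc)
  show "a + b = b + a" by transfer (simp add: add.commute)
  show "0 + a = a" by transfer simp
  show "- a + a = 0" by transfer simp
  show "a - b = a + - b" by transfer simp
  show "(a + b) * c = a * c + b * c"
    by transfer (vector matrix_matrix_mult_def sum.distrib[symmetric] field_simps)
  show "a * (b + c) = a * b + a * c" by transfer (simp add: matrix_add_ldistrib)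
  show "1 * a = a" by transfer simp
  show "a * 1 = a" by transfer simp
  show "(0::'a cm) \<noteq> 1" by transfer (rule zero_ne_mat1)
qed
end

lift_definition sc :: "complex \<Rightarrow> 'n::finite cm" is "\<lambda>c. mat c" .
lift_definition adj :: "'n::finite cm \<Rightarrow> 'n cm" is cadjoint .
definition tr :: "'n::finite cm \<Rightarrow> complex" where "tr x = trace (Rep_cm x)"

lemma mat_mult_left: "(mat c :: complex^'n::finite^'n) ** A = (\<chi> i j. c * A $ i $ j)"
  by (simp add: matrix_matrix_mult_def mat_def vec_eq_iff if_distrib if_distribR sum.delta' cong: if_cong)
lemma mat_mult_right: "A ** (mat c :: complex^'n::finite^'n) = (\<chi> i j. c * A $ i $ j)"
  by (simp add: matrix_matrix_mult_def mat_def vec_eq_iff if_distrib if_distribR sum.delta' mult.commute cong: if_cong)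

lemma sc_comm: "sc c * x = x * sc c"
  by transfer (simp add: mat_mult_left mat_mult_right)
lemma sc_mult: "sc a * sc b = sc (a * b)"
  by transfer (subst mat_mult_left, simp add: mat_def vec_eq_iff)
lemma sc_add: "sc (a + b) = sc a + sc b"
  by transfer (simp add: mat_def vec_eq_iff)
lemma sc_diff: "sc (a - b) = sc a - sc b"
  by transfer (simp add: mat_def vec_eq_iff)
lemma sc_minus: "sc (- a) = - sc a"
  by transfer (simp add: mat_def vec_eq_iff)
lemma sc_one[simp]: "sc 1 = 1"
  by transfer simp
lemma sc_zero[simp]: "sc 0 = 0"
  by transfer simp

lemma adj_mult: "adj (x * y) = adj y * adj x"
  by transfer (simp add: cadjoint_def matrix_matrix_mult_def vec_eq_iff mult.commute)
lemma adj_add: "adj (x + y) = adj x + adj y"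
  by transfer (simp add: cadjoint_def vec_eq_iff)
lemma adj_diff: "adj (x - y) = adj x - adj y"
  by transfer (simp add: cadjoint_def vec_eq_iff)
lemma adj_one[simp]: "adj 1 = 1"
  by transfer (simp add: cadjoint_def mat_def vec_eq_iff)
lemma adj_sc: "adj (sc c) = sc (cnj c)"
  by transfer (auto simp add: cadjoint_def mat_def vec_eq_iff)
lemma adj_adj[simp]: "adj (adj x) = x"
  by transfer (simp add: cadjoint_def vec_eq_iff)

lemma adj_zero:
  assumes "adj x * x = 0" shows "x = 0"
proof -
  have "Rep_cm (adj x * x) = Rep_cm 0" using assms by simp
  hence h: "(cadjoint (Rep_cm x) ** Rep_cm x) = 0"
    by (simp add: times_cm.rep_eq adj.rep_eq zero_cm.rep_eq)
  have "\<forall>i j. Rep_cm x $ i $ j = 0"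
  proof (intro allI)
    fix i j
    have "(\<Sum>k\<in>UNIV. cnj (Rep_cm x $ k $ j) * Rep_cm x $ k $ j) = 0"
    proof -
      have "(cadjoint (Rep_cm x) ** Rep_cm x) $ j $ j = 0" using h by simp
      thus ?thesis by (simp add: matrix_matrix_mult_def cadjoint_def)
    qed
    moreover have eq: "\<And>z::complex. cnj z * z = complex_of_real ((cmod z)\<^sup>2)"
        by (subst complex_norm_square) (rule mult.commute)
    ultimately have "(\<Sum>k\<in>UNIV. complex_of_real ((cmod (Rep_cm x $ k $ j))\<^sup>2)) = 0"
      by (simp only: eq)
    hence "(\<Sum>k\<in>UNIV. (cmod (Rep_cm x $ k $ j))\<^sup>2) = 0"
      by (simp only: of_real_sum[symmetric] of_real_eq_0_iff)
    hence "\<forall>k\<in>UNIV. (cmod (Rep_cm x $ k $ j))\<^sup>2 = 0"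
      using sum_nonneg_eq_0_iff[of "UNIV" "\<lambda>k. (cmod (Rep_cm x $ k $ j))\<^sup>2"] by simp
    hence "(cmod (Rep_cm x $ i $ j))\<^sup>2 = 0" by blast
    thus "Rep_cm x $ i $ j = 0" by simp
  qed
  hence "Rep_cm x = 0" by (simp add: vec_eq_iff)
  thus ?thesis by (simp add: Rep_cm_inject[symmetric] zero_cm.rep_eq)
qed

lemma tr_mult: "tr (x * y) = tr (y * x)"
  unfolding tr_def times_cm.rep_eq by (rule trace_mul_sym)
lemma tr_add: "tr (x + y) = tr x + tr y"
  unfolding tr_def plus_cm.rep_eq by (rule trace_add)
lemma tr_diff: "tr (x - y) = tr x - tr y"
  unfolding tr_def minus_cm.rep_eq by (rule trace_sub)
lemma tr_zero[simp]: "tr 0 = 0"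
  unfolding tr_def zero_cm.rep_eq by (simp add: trace_def)
lemma tr_sum: "tr (sum f A) = (\<Sum>a\<in>A. tr (f a))"
  by (induction A rule: infinite_finite_induct) (auto simp: tr_add)
lemma tr_sc: "tr (sc c * x) = c * tr x"
  unfolding tr_def by (simp add: times_cm.rep_eq sc.rep_eq mat_mult_left trace_def sum_distrib_left)
lemma tr_adj: "tr (adj x) = cnj (tr x)"
  unfolding tr_def by (simp add: adj.rep_eq cadjoint_def trace_def)

lemma Rep_mpow: "Rep_cm (x ^ k) = mpow (Rep_cm x) k"
  by (induction k) (auto simp: one_cm.rep_eq times_cm.rep_eq)
lemma Abs_mpow: "Abs_cm (mpow A k) = (Abs_cm A) ^ k"
proof -
  have "mpow A k = Rep_cm (Abs_cm A ^ k)" by (simp add: Rep_mpow Abs_cm_inverse)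
  thus ?thesis by (simp add: Rep_cm_inverse)
qed
lemma Abs_cscale: "Abs_cm (cscale c A) = sc c * Abs_cm A"
proof -
  have "cscale c A = mat c ** A" by (simp add: cscale_def mat_mult_left)
  thus ?thesis by (simp add: sc_def times_cm_def Abs_cm_inverse)
qed



lemma pow_inv:
  fixes P Pi :: "'a::ring_1"
  assumes "Pi * P = 1" "P * Pi = 1"
  shows "Pi^k * P^k = 1" "P^k * Pi^k = 1"
proof -
  show "Pi^k * P^k = 1"
  proof (induction k)
    case (Suc k)
    have "Pi^Suc k * P^Suc k = Pi^k * (Pi * P) * P^k"
      by (simp only: power_Suc2[of Pi k] power_Suc[of P k] mult.assoc)
    also have "\<dots> = 1" using Suc assms by simp
    finally show ?case .
  qed simp
  show "P^k * Pi^k = 1"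
  proof (induction k)
    case (Suc k)
    have "P^Suc k * Pi^Suc k = P^k * (P * Pi) * Pi^k"
      by (simp only: power_Suc2[of P k] power_Suc[of Pi k] mult.assoc)
    also have "\<dots> = 1" using Suc assms by simp
    finally show ?case .
  qed simp
qed

lemma core:
  fixes P Pi Q :: "'a::ring_1"
  assumes inv1: "Pi * P = 1" and inv2: "P * Pi = 1" and m: "m \<ge> 2"
    and R: "\<And>k. 1 \<le> k \<Longrightarrow> k \<le> m - 1 \<Longrightarrow> P^(Suc k) + Q^(Suc k) = P^k * Q + Q^k * P"
    and Z: "P^m + Q^m = 0"
  shows "(\<Sum>j<m. Pi^j * (Pi * (P - Q)) * P^j) = 1 + 1"
    and "Pi * (P - Q) * P * (Pi * (P - Q)) = 0"
    and "Pi * (P - Q) * (Pi * (P - Q)) = (1 + 1) * (Pi * (P - Q))"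
proof -
  define F where "F = Pi * (P - Q)"
  have step: "Pi^(Suc k) * (P^(Suc k) - Q^(Suc k)) = F + Pi * (Pi^k * (P^k - Q^k)) * P"
    if "1 \<le> k" "k \<le> m - 1" for k
  proof -
    have "P^(Suc k) - Q^(Suc k) = P^k * (P - Q) + (P^k - Q^k) * P"
    proof -
      have "Q^(Suc k) = P^k * Q + Q^k * P - P^(Suc k)" using R[OF that] by (simp add: algebra_simps)
      thus ?thesis by (simp add: algebra_simps power_commutes)
    qed
    hence "Pi^(Suc k) * (P^(Suc k) - Q^(Suc k)) = Pi * Pi^k * (P^k * (P - Q) + (P^k - Q^k) * P)"
      by (simp only: power_Suc)
    also have "\<dots> = Pi * (Pi^k * P^k) * (P - Q) + Pi * (Pi^k * (P^k - Q^k)) * P"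
      by (simp only: distrib_left mult.assoc)
    also have "\<dots> = F + Pi * (Pi^k * (P^k - Q^k)) * P"
      using pow_inv[OF inv1 inv2] by (simp add: F_def)
    finally show ?thesis .
  qed
  have Fk: "Pi^k * (P^k - Q^k) = (\<Sum>j<k. Pi^j * F * P^j)" if "1 \<le> k" "k \<le> m" for k
    using that
  proof (induction k rule: nat_induct_at_least)
    case base
    then show ?case by (simp add: F_def)
  next
    case (Suc k)
    have "Pi^(Suc k) * (P^(Suc k) - Q^(Suc k)) = F + Pi * (Pi^k * (P^k - Q^k)) * P"
      using step Suc by simp
    also have "\<dots> = F + Pi * (\<Sum>j<k. Pi^j * F * P^j) * P"
      using Suc by simp
    also have "\<dots> = F + (\<Sum>j<k. Pi^(Suc j) * F * P^(Suc j))"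
      by (simp add: sum_distrib_left sum_distrib_right mult.assoc power_commutes)
    also have "\<dots> = (\<Sum>j<Suc k. Pi^j * F * P^j)"
      by (simp only: sum.lessThan_Suc_shift power_0 mult_1_left mult_1_right)
    finally show ?case .
  qed
  have "Pi^m * (P^m - Q^m) = 1 + 1"
  proof -
    have "P^m - Q^m = P^m + P^m" using Z by (simp add: algebra_simps eq_neg_iff_add_eq_0)
    hence "Pi^m * (P^m - Q^m) = Pi^m * P^m + Pi^m * P^m" by (simp only: distrib_left)
    thus ?thesis using pow_inv[OF inv1 inv2] by simp
  qed
  thus "(\<Sum>j<m. Pi^j * (Pi * (P - Q)) * P^j) = 1 + 1"
    using Fk[of m] m by (simp add: F_def)
  have R1: "P * P + Q * Q = P * Q + Q * P" using R[of 1] m by (simp add: power2_eq_square)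
  have "Pi * (P - Q) * P * (Pi * (P - Q)) = Pi * (P - Q) * (P * Pi) * (P - Q)"
    by (simp add: mult.assoc)
  also have "\<dots> = Pi * ((P * P + Q * Q) - (P * Q + Q * P))"
    using inv2 by (simp add: algebra_simps)
  also have "\<dots> = 0" using R1 by simp
  finally show "Pi * (P - Q) * P * (Pi * (P - Q)) = 0" .
  obtain m' where mm: "m = Suc m'" using m by (cases m) auto
  have m1: "m - 1 = m'" using mm by simp
  have Rm: "P^(m-1) * Q + Q^(m-1) * P = 0"
    using R[of "m-1"] m Z unfolding m1 unfolding mm by simp
  have Qm: "Q^m = Q^(m-1) * Q" unfolding m1 unfolding mm by (rule power_Suc2)
  have Pm: "P^m = P^(m-1) * P" unfolding m1 unfolding mm by (rule power_Suc2)
  have "Q^m = Q^(m-1) * (P * Pi) * Q" using Qm inv2 by simp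
  also have "\<dots> = Q^(m-1) * P * (Pi * Q)" by (simp only: mult.assoc)
  also have "Q^(m-1) * P = - (P^(m-1) * Q)"
    using Rm by (simp add: eq_neg_iff_add_eq_0 add.commute)
  also have "- (P^(m-1) * Q) * (Pi * Q) = - (P^(m-1) * (Q * Pi * Q))"
    by (simp add: mult.assoc)
  finally have Qm2: "Q^m = - (P^(m-1) * (Q * Pi * Q))" .
  have "Q^m = - (P^(m-1) * P)" using Z Pm by (simp add: eq_neg_iff_add_eq_0 add.commute)
  hence "P^(m-1) * P = P^(m-1) * (Q * Pi * Q)" using Qm2 by simp
  hence "Pi^(m-1) * (P^(m-1) * P) = Pi^(m-1) * (P^(m-1) * (Q * Pi * Q))" by simp
  hence PQ: "P = Q * Pi * Q" using pow_inv[OF inv1 inv2] by (simp flip: mult.assoc)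
  have F1: "Pi * (P - Q) = 1 - Pi * Q" using inv1 by (simp add: right_diff_distrib)
  have HH: "Pi * Q * (Pi * Q) = 1"
  proof -
    have "Pi * Q * (Pi * Q) = Pi * (Q * Pi * Q)" by (simp only: mult.assoc)
    also have "\<dots> = 1" using inv1 by (simp flip: PQ)
    finally show ?thesis .
  qed
  have "Pi * (P - Q) * (Pi * (P - Q)) = (1 - Pi * Q) * (1 - Pi * Q)" unfolding F1 ..
  also have "\<dots> = 1 - Pi * Q - Pi * Q + Pi * Q * (Pi * Q)"
    by (simp only: left_diff_distrib right_diff_distrib mult_1_left mult_1_right diff_diff_eq2 diff_add_eq)
  also have "\<dots> = (1 - Pi * Q) + (1 - Pi * Q)" unfolding HH by (simp add: algebra_simps)
  also have "\<dots> = (1 + 1) * (Pi * (P - Q))" unfolding F1 by (simp only: distrib_right mult_1_left)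
  finally show "Pi * (P - Q) * (Pi * (P - Q)) = (1 + 1) * (Pi * (P - Q))" .
qed



lemma sc_left: "x * (sc c * y) = sc c * (x * y)"
proof -
  have "x * (sc c * y) = (x * sc c) * y" by (simp only: mult.assoc)
  also have "x * sc c = sc c * x" by (rule sc_comm[symmetric])
  finally show ?thesis by (simp only: mult.assoc)
qed
lemma sc_assoc: "sc a * (sc b * y) = sc (a * b) * y"
  by (simp only: mult.assoc[symmetric] sc_mult)
lemma sc_addm: "sc a * x + sc b * x = sc (a + b) * x"
  by (simp add: sc_add distrib_right)
lemma sc_mm: "sc a * A * (sc c * C) = sc (a * c) * (A * C)"
proof -
  have "sc a * A * (sc c * C) = sc a * (A * (sc c * C))" by (simp only: mult.assoc)
  also have "A * (sc c * C) = sc c * (A * C)" by (rule sc_left)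
  finally show ?thesis by (simp only: sc_assoc)
qed
lemma sc_pow: "(sc c * x)^k = sc (c^k) * x^k"
proof (induction k)
  case (Suc k)
  have "(sc c * x)^Suc k = sc c * x * (sc (c^k) * x^k)" using Suc by (simp only: power_Suc)
  also have "\<dots> = sc (c * c^k) * (x * x^k)" by (rule sc_mm)
  finally show ?case by (simp only: power_Suc)
qed simp
lemma sc_cancel: assumes "c \<noteq> 0" "sc c * x = sc c * y" shows "x = y"
proof -
  have "sc (1/c) * (sc c * x) = sc (1/c) * (sc c * y)" using assms by simp
  thus ?thesis using assms(1) by (simp add: sc_assoc)
qed

definition Dm :: "complex \<Rightarrow> complex \<Rightarrow> 'n::finite cm \<Rightarrow> 'n cm \<Rightarrow> nat \<Rightarrow> 'n cm" where
  "Dm a b P Q k = sc a * P^k + sc b * Q^k"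

lemma Dm_prod: "Dm a b P Q k * Dm a b P Q 1 =
   sc (a*a) * (P^k*P) + sc (a*b) * (P^k*Q) + sc (b*a) * (Q^k*P) + sc (b*b) * (Q^k*Q)"
  unfolding Dm_def power_one_right by (simp only: distrib_left distrib_right sc_mm add_ac)

lemma Dm_add: "Dm a b P Q j + Dm b a P Q j = sc (a + b) * (P^j + Q^j)"
  unfolding Dm_def by (simp add: sc_add algebra_simps)

definition "al = (1 - \<i>) / 2"
definition "be = (1 + \<i>) / 2"
lemma al_be: "al * al + be * be = 0" "al * be + be * al = 1" "al + be = 1"
   "al * al - be * be = - \<i>" "cnj al = be" "cnj be = al"
  by (auto simp: al_def be_def field_simps complex_eq_iff)

lemma ring_comb1:
  fixes c1 c2 c3 X1 X2 X3 X4 :: "'a::ring_1"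
  assumes "c3 = - c1" "c2 + c2 = 1"
  shows "c1*X1 + c2*X2 + c2*X3 + c3*X4 + (c3*X1 + c2*X2 + c2*X3 + c1*X4) = X2 + X3"
proof -
  have "c1*X1 + c2*X2 + c2*X3 + c3*X4 + (c3*X1 + c2*X2 + c2*X3 + c1*X4)
      = (c2 + c2)*X2 + (c2 + c2)*X3 + (c1 + c3)*X1 + (c3 + c1)*X4"
    by (simp add: algebra_simps)
  thus ?thesis using assms by simp
qed

lemma ring_comb2:
  fixes c1 c2 c3 X1 X2 X3 X4 :: "'a::ring_1"
  assumes "c1 - c3 = m"
  shows "c1*X1 + c2*X2 + c2*X3 + c3*X4 - (c3*X1 + c2*X2 + c2*X3 + c1*X4) = m * (X1 - X4)"
proof -
  have "c1*X1 + c2*X2 + c2*X3 + c3*X4 - (c3*X1 + c2*X2 + c2*X3 + c1*X4) = (c1 - c3) * X1 - (c1 - c3) * X4"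
    by (simp add: algebra_simps)
  thus ?thesis using assms by (simp add: algebra_simps)
qed

lemma DE_sum: "Dm al be P Q k * Dm al be P Q 1 + Dm be al P Q k * Dm be al P Q 1 = P^k*Q + Q^k*P"
proof -
  have c: "sc (be * al) = (sc (al * be) :: 'a::finite cm)" by (simp add: mult.commute)
  have c3: "sc (be * be) = - (sc (al * al) :: 'a cm)"
  proof -
    have "be * be = - (al * al)" using al_be(1) by (simp add: eq_neg_iff_add_eq_0 add.commute)
    thus ?thesis by (simp add: sc_minus)
  qed
  have c2: "sc (al * be) + sc (al * be) = (1 :: 'a cm)"
  proof -
    have "al * be + al * be = 1" using al_be(2) by (simp add: mult.commute)
    hence "sc (al * be + al * be) = (1 :: 'a cm)" by simp
    thus ?thesis by (simp only: sc_add)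
  qed
  show ?thesis unfolding Dm_prod c by (rule ring_comb1[OF c3 c2])
qed

lemma DE_diff: "Dm al be P Q k * Dm al be P Q 1 - Dm be al P Q k * Dm be al P Q 1 =
   sc (-\<i>) * (P^Suc k - Q^Suc k)"
proof -
  have c: "sc (be * al) = (sc (al * be) :: 'a::finite cm)" by (simp add: mult.commute)
  have m: "sc (al * al) - sc (be * be) = (sc (-\<i>) :: 'a cm)"
    using al_be(4) by (simp flip: sc_diff)
  show ?thesis unfolding Dm_prod c ring_comb2[OF m] by (simp only: power_Suc2)
qed

lemma DE_add: "Dm al be P Q j + Dm be al P Q j = P^j + Q^j"
  unfolding Dm_add al_be by simp



lemma om_pow: "omega_pow d (1/4) ^ k = omega_pow d (real k / 4)"
proof -
  have "omega_pow d (1/4) ^ k = exp (of_nat k * (2 * of_real pi * \<i> * of_real (1/4) / of_nat d))"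
    unfolding omega_pow_def by (rule exp_of_nat_mult[symmetric])
  also have "of_nat k * (2 * of_real pi * \<i> * of_real (1/4) / of_nat d) =
      (2 * of_real pi * \<i> * of_real (real k / 4) / of_nat d :: complex)"
    by simp
  finally show ?thesis unfolding omega_pow_def .
qed

lemma om_nz: "omega_pow d x \<noteq> 0"
  unfolding omega_pow_def by simp

lemma om_cnj: "cnj (omega_pow d x) = 1 / omega_pow d x"
proof -
  have ceq: "cnj (2 * of_real pi * \<i> * of_real x / of_nat d) = - (2 * of_real pi * \<i> * of_real x / of_nat d :: complex)"
    by simp
  show ?thesis unfolding omega_pow_def exp_cnj ceq by (rule exp_minus')
qed

lemma om_d: assumes "d > 0" shows "omega_pow d (1/4) ^ d = \<i>"
proof -
  have "omega_pow d (1/4) ^ d = omega_pow d (real d / 4)" by (rule om_pow)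
  also have "\<dots> = exp (\<i> * of_real (pi / 2))"
    unfolding omega_pow_def using assms by (intro arg_cong[of _ _ exp]) (simp add: field_simps)
  also have "\<dots> = \<i>" using cis_conv_exp[of "pi/2"] cis_pi_half by simp
  finally show ?thesis .
qed

lemma matrix_inv_unique:
  fixes A A' :: "complex^'n::finite^'n"
  assumes "A ** A' = mat 1" "A' ** A = mat 1"
  shows "matrix_inv A = A'"
proof -
  have "\<exists>M. A ** M = mat 1 \<and> M ** A = mat 1" using assms by blast
  hence h: "A ** matrix_inv A = mat 1 \<and> matrix_inv A ** A = mat 1"
    unfolding matrix_inv_def by (rule someI_ex)
  have "matrix_inv A = matrix_inv A ** (A ** A')" using assms by simp
  also have "\<dots> = A'" using h by (simp add: matrix_mul_assoc)
  finally show ?thesis .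
qed

lemma adj_pow: "adj (x ^ k) = (adj x) ^ k"
proof (induction k)
  case (Suc k)
  then show ?case by (simp add: adj_mult power_commutes)
qed simp

lemma adj_two[simp]: "adj (2 :: 'n::finite cm) = 2"
proof -
  have "adj (1 + 1 :: 'n cm) = 1 + 1" by (simp only: adj_add adj_one)
  thus ?thesis by simp
qed
lemma sc_two: "sc 2 = (2 :: 'n::finite cm)"
proof -
  have "sc (1 + 1) = (1 + 1 :: 'n cm)" by (simp only: sc_add sc_one)
  thus ?thesis by simp
qed

lemma unitary_sum:
  fixes U V :: "'n::finite cm"
  assumes hU: "adj U * U = 1" and hV: "adj V * V = 1" and s: "U + V = 1 + 1"
  shows "U = 1"
proof -
  define W where "W = U - 1"
  have U: "U = W + 1" by (simp add: W_def)
  have V: "V = 1 - W" using s by (simp add: W_def algebra_simps)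
  have "adj U * U = adj W * W + adj W + W + 1" unfolding U by (simp add: adj_add algebra_simps)
  hence h1: "adj W * W + adj W + W = 0" using hU by simp
  have "adj V * V = adj W * W - adj W - W + 1" unfolding V by (simp add: adj_diff algebra_simps)
  hence h2: "adj W * W - adj W - W = 0" using hV by simp
  have "(adj W * W + adj W + W) + (adj W * W - adj W - W) = adj W * W + adj W * W"
    by (simp add: algebra_simps)
  hence "adj W * W + adj W * W = 0" using h1 h2 by simp
  hence "sc 2 * (adj W * W) = sc 2 * 0"
    by (simp add: sc_two mult_2)
  hence "adj W * W = 0" by (rule sc_cancel[rotated]) simp
  hence "W = 0" by (rule adj_zero)
  thus ?thesis using U by simp
qed

lemma trace_core:
  fixes P Pi Q :: "'n::finite cm"
  assumes inv1: "Pi * P = 1" and inv2: "P * Pi = 1"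
    and S: "(\<Sum>j<m. Pi^j * (Pi * (P - Q)) * P^j) = 1 + 1"
    and FPF: "Pi * (P - Q) * P * (Pi * (P - Q)) = 0"
    and FF: "Pi * (P - Q) * (Pi * (P - Q)) = (1 + 1) * (Pi * (P - Q))"
  shows "tr P = 0" "tr Q = 0"
proof -
  define F where "F = Pi * (P - Q)"
  have FF': "F * F = (1 + 1) * F" using FF by (simp only: F_def)
  have FPF': "F * (P * F) = 0" using FPF by (simp only: F_def mult.assoc)
  have S': "(\<Sum>j<m. Pi^j * F * P^j) = 1 + 1" using S by (simp only: F_def)
  have "tr (P * ((1 + 1) * F)) = tr ((P * F) * F)" by (simp only: FF'[symmetric] mult.assoc)
  also have "\<dots> = tr (F * (P * F))" by (rule tr_mult)
  also have "\<dots> = 0" by (simp only: FPF' tr_zero)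
  finally have a: "tr (P * ((1 + 1) * F)) = 0" .
  have "tr (P * ((1 + 1) * F)) = tr (P * F) + tr (P * F)"
    by (simp only: distrib_left distrib_right mult_1_left tr_add)
  hence PF: "tr (P * F) = 0" using a by simp
  have trm: "tr (P * (Pi^j * F * P^j)) = tr (P * F)" for j
  proof -
    have "tr (P * (Pi^j * F * P^j)) = tr ((P * Pi^j * F) * P^j)" by (simp only: mult.assoc)
    also have "\<dots> = tr (P^j * (P * Pi^j * F))" by (rule tr_mult)
    also have "P^j * (P * Pi^j * F) = (P^j * P * Pi^j) * F" by (simp only: mult.assoc)
    also have "P^j * P * Pi^j = P"
    proof -
      have "P^j * P * Pi^j = P * (P^j * Pi^j)" by (simp only: power_commutes mult.assoc)
      thus ?thesis using pow_inv[OF inv1 inv2, of j] by simp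
    qed
    finally show ?thesis .
  qed
  have "tr (P * (1 + 1)) = (\<Sum>j<m. tr (P * (Pi^j * F * P^j)))"
    by (simp only: S'[symmetric] sum_distrib_left tr_sum)
  also have "\<dots> = 0" using trm PF by simp
  finally have "tr P + tr P = 0" by (simp only: distrib_left mult_1_right tr_add)
  thus tP: "tr P = 0" by simp
  have "Q = P * (Pi * Q)" using inv2 by (simp flip: mult.assoc)
  also have "Pi * Q = 1 - F" using inv1 by (simp add: F_def algebra_simps)
  finally have "Q = P - P * F" by (simp add: algebra_simps)
  thus "tr Q = 0" using tP PF by (simp add: tr_diff)
qed



lemma Abs_plus: "Abs_cm (a + b) = Abs_cm a + Abs_cm b"
  by (rule Rep_cm_inject[THEN iffD1]) (simp add: plus_cm.rep_eq Abs_cm_inverse)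
lemma Abs_times: "Abs_cm (a ** b) = Abs_cm a * Abs_cm b"
  by (rule Rep_cm_inject[THEN iffD1]) (simp add: times_cm.rep_eq Abs_cm_inverse)
lemma Abs_one: "Abs_cm (mat 1) = 1"
  by (rule Rep_cm_inject[THEN iffD1]) (simp add: one_cm.rep_eq Abs_cm_inverse)
lemma Abs_adj: "adj (Abs_cm a) = Abs_cm (cadjoint a)"
  by (rule Rep_cm_inject[THEN iffD1]) (simp add: adj.rep_eq Abs_cm_inverse)

lemma Abs_Cop1: "Abs_cm (Cop1 d B1 B2 k) =
   sc (acoef d k) * (Abs_cm (matrix_inv B1))^k + sc (cnj (acoef d k) * omega_pow d (real k)) * (Abs_cm (matrix_inv B2))^k"
  unfolding Cop1_def Abs_plus Abs_cscale Abs_mpow ..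
lemma Abs_Cop2: "Abs_cm (Cop2 d B1 B2 k) =
   sc (cnj (acoef d k)) * (Abs_cm (matrix_inv B1))^k + sc (acoef d k) * (Abs_cm (matrix_inv B2))^k"
  unfolding Cop2_def Abs_plus Abs_cscale Abs_mpow ..

lemma s1: fixes u :: complex assumes "u \<noteq> 0" shows "u^(2*k) * (1/u)^k = u^k"
proof -
  have "u^(2*k) = u^k * u^k" by (simp add: mult_2 power_add)
  moreover have "(1/u)^k = 1/u^k" by (simp add: power_one_over)
  ultimately show ?thesis using assms by simp
qed
lemma s2: fixes u :: complex assumes "u \<noteq> 0" shows "(1/u)^k * u^(4*k) = u^(2*k) * u^k"
proof -
  have "u^(4*k) = u^k * (u^(2*k) * u^k)" by (simp flip: power_add)
  moreover have "(1/u)^k = 1/u^k" by (simp add: power_one_over)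
  ultimately show ?thesis using assms by simp
qed

lemma Cop_trans:
  fixes X Y :: "'n::finite cm" and d k :: nat
  defines "u \<equiv> omega_pow d (1/4)"
  defines "P \<equiv> sc (1/u) * X" and "Q \<equiv> sc u * Y"
  shows "sc (acoef d k) * X^k + sc (cnj (acoef d k) * omega_pow d (real k)) * Y^k = sc (u^(2*k)) * Dm al be P Q k"
    and "sc (cnj (acoef d k)) * X^k + sc (acoef d k) * Y^k = Dm be al P Q k"
proof -
  have unz: "u \<noteq> 0" unfolding u_def by (rule om_nz)
  have ak: "acoef d k = al * u^k" unfolding acoef_def al_def u_def om_pow ..
  have cu: "cnj u = 1 / u" unfolding u_def by (rule om_cnj)
  have u4: "omega_pow d (real k) = u^(4*k)" unfolding u_def om_pow by simp
  have cak: "cnj (acoef d k) = be * (1/u)^k" unfolding ak using al_be(5) cu by (simp add: power_one_over)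
  have DP: "Dm a b P Q k = sc (a * (1/u)^k) * X^k + sc (b * u^k) * Y^k" for a b
    unfolding Dm_def P_def Q_def sc_pow by (simp add: sc_assoc)
  have e1: "acoef d k = u ^ (2 * k) * (al * (1 / u) ^ k)"
  proof -
    have "u ^ (2 * k) * (al * (1 / u) ^ k) = al * (u^(2*k) * (1/u)^k)" by (simp only: ac_simps)
    also have "\<dots> = al * u^k" using s1[OF unz] by simp
    finally show ?thesis unfolding ak by (rule sym)
  qed
  have e2: "cnj (acoef d k) * omega_pow d (real k) = u ^ (2 * k) * (be * u ^ k)"
  proof -
    have "cnj (acoef d k) * omega_pow d (real k) = be * ((1/u)^k * u^(4*k))"
      unfolding cak u4 by (simp only: ac_simps)
    also have "\<dots> = be * (u^(2*k) * u^k)" using s2[OF unz] by simp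
    finally show ?thesis by (simp only: ac_simps)
  qed
  show "sc (acoef d k) * X^k + sc (cnj (acoef d k) * omega_pow d (real k)) * Y^k = sc (u^(2*k)) * Dm al be P Q k"
    unfolding DP distrib_left sc_assoc unfolding e2 unfolding e1 ..
  show "sc (cnj (acoef d k)) * X^k + sc (acoef d k) * Y^k = Dm be al P Q k"
    unfolding DP unfolding cak unfolding ak by (simp only: ac_simps)
qed


lemma scal_facts: "al * (-\<i>) + be * \<i> = -1" "be * (-\<i>) + al * \<i> = 1"
  by (auto simp: al_def be_def field_simps complex_eq_iff)

theorem lemma1:
  fixes d :: nat and B1 B2 :: "complex^'n^'n"
  assumes "d \<ge> 2"
    and "unitary_mat B1" and "unitary_mat B2"
    and "\<And>c. is_eigenvalue B1 c \<Longrightarrow> c \<in> {omega_pow d (real l) | l. l < d}"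
    and "\<And>c. is_eigenvalue B2 c \<Longrightarrow> c \<in> {omega_pow d (real l) | l. l < d}"
    and "\<And>k. 1 \<le> k \<Longrightarrow> k \<le> d - 1 \<Longrightarrow> Cop1 d B1 B2 k = mpow (Cop1 d B1 B2 1) k"
    and "\<And>k. 1 \<le> k \<Longrightarrow> k \<le> d - 1 \<Longrightarrow> Cop2 d B1 B2 k = mpow (Cop2 d B1 B2 1) k"
    and "\<And>k. 1 \<le> k \<Longrightarrow> k \<le> d - 1 \<Longrightarrow> Cop1 d B1 B2 (d - k) ** Cop1 d B1 B2 k = mat 1"
    and "\<And>k. 1 \<le> k \<Longrightarrow> k \<le> d - 1 \<Longrightarrow> Cop2 d B1 B2 (d - k) ** Cop2 d B1 B2 k = mat 1"
  shows "\<forall>n::nat. 0 < n \<and> n < d \<and> n dvd d \<longrightarrow>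
           trace (mpow B1 n) = 0 \<and> trace (mpow B2 n) = 0"
proof (intro allI impI)
  fix n :: nat
  assume n: "0 < n \<and> n < d \<and> n dvd d"
  have d0: "d > 0" using assms(1) by simp
  have d1: "1 \<le> d - 1" using assms(1) by simp
  have dS: "d = Suc (d - 1)" using d0 by simp
  define u where "u = omega_pow d (1/4)"
  have unz: "u \<noteq> 0" unfolding u_def by (rule om_nz)
  have ud: "u^d = \<i>" unfolding u_def using d0 by (rule om_d)
  define A1 where "A1 = (Abs_cm B1 :: 'n cm)"
  define A2 where "A2 = (Abs_cm B2 :: 'n cm)"
  define X where "X = (Abs_cm (matrix_inv B1) :: 'n cm)"
  define Y where "Y = (Abs_cm (matrix_inv B2) :: 'n cm)"
  have iv1: "matrix_inv B1 = cadjoint B1"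
    using assms(2) unfolding unitary_mat_def by (intro matrix_inv_unique) auto
  have iv2: "matrix_inv B2 = cadjoint B2"
    using assms(3) unfolding unitary_mat_def by (intro matrix_inv_unique) auto
  have XA: "X = adj A1" unfolding X_def A1_def iv1 Abs_adj ..
  have YA: "Y = adj A2" unfolding Y_def A2_def iv2 Abs_adj ..
  have U1: "A1 * X = 1" "X * A1 = 1"
  proof -
    have "Abs_cm (B1 ** cadjoint B1) = Abs_cm (mat 1)" "Abs_cm (cadjoint B1 ** B1) = Abs_cm (mat 1)"
      using assms(2) unfolding unitary_mat_def by simp_all
    thus "A1 * X = 1" "X * A1 = 1" unfolding Abs_times Abs_one XA A1_def Abs_adj by simp_all
  qed
  have U2: "A2 * Y = 1" "Y * A2 = 1"
  proof -
    have "Abs_cm (B2 ** cadjoint B2) = Abs_cm (mat 1)" "Abs_cm (cadjoint B2 ** B2) = Abs_cm (mat 1)"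
      using assms(3) unfolding unitary_mat_def by simp_all
    thus "A2 * Y = 1" "Y * A2 = 1" unfolding Abs_times Abs_one YA A2_def Abs_adj by simp_all
  qed
  define P where "P = sc (1/u) * X"
  define Q where "Q = sc u * Y"
  define Pi where "Pi = sc u * A1"
  have PiP: "Pi * P = 1"
  proof -
    have "Pi * P = sc (u * (1/u)) * (A1 * X)" unfolding Pi_def P_def by (rule sc_mm)
    thus ?thesis using unz U1 by simp
  qed
  have PPi: "P * Pi = 1"
  proof -
    have "P * Pi = sc ((1/u) * u) * (X * A1)" unfolding Pi_def P_def by (rule sc_mm)
    thus ?thesis using unz U1 by simp
  qed
  define D where "D = Dm al be P Q"
  define E where "E = Dm be al P Q"
  have C1: "Abs_cm (Cop1 d B1 B2 k) = sc (u^(2*k)) * D k" for k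
    unfolding Abs_Cop1 X_def[symmetric] Y_def[symmetric] D_def P_def Q_def u_def by (rule Cop_trans(1))
  have C2: "Abs_cm (Cop2 d B1 B2 k) = E k" for k
    unfolding Abs_Cop2 X_def[symmetric] Y_def[symmetric] E_def P_def Q_def u_def by (rule Cop_trans(2))
  have hD: "D k = (D 1)^k" if "1 \<le> k" "k \<le> d - 1" for k
  proof -
    have "Abs_cm (Cop1 d B1 B2 k) = Abs_cm (mpow (Cop1 d B1 B2 1) k)" using assms(6)[OF that] by simp
    hence "sc (u^(2*k)) * D k = (sc (u^(2*1)) * D 1)^k" unfolding Abs_mpow C1 .
    also have "\<dots> = sc (u^(2*k)) * (D 1)^k" unfolding sc_pow by (simp add: power_mult)
    finally show ?thesis by (rule sc_cancel[rotated]) (simp add: unz)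
  qed
  have hE: "E k = (E 1)^k" if "1 \<le> k" "k \<le> d - 1" for k
  proof -
    have "Abs_cm (Cop2 d B1 B2 k) = Abs_cm (mpow (Cop2 d B1 B2 1) k)" using assms(7)[OF that] by simp
    thus ?thesis unfolding Abs_mpow C2 .
  qed
  have hD1: "(D 1)^d = -1"
  proof -
    have "Abs_cm (Cop1 d B1 B2 (d - 1) ** Cop1 d B1 B2 1) = Abs_cm (mat 1)"
      using assms(8)[of 1] assms(1) by simp
    hence "Abs_cm (mpow (Cop1 d B1 B2 1) (d - 1)) * Abs_cm (Cop1 d B1 B2 1) = 1"
      unfolding Abs_times Abs_one using assms(6)[OF d1 order_refl] by simp
    hence "(Abs_cm (Cop1 d B1 B2 1))^d = 1"
      unfolding Abs_mpow by (subst dS) (simp only: power_Suc2)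
    hence "(sc (u^(2*1)) * D 1)^d = 1" unfolding C1 .
    moreover have "(u^(2*1))^d = (u^d)^2" by (simp add: power_mult[symmetric] mult.commute)
    ultimately have "sc ((u^d)^2) * (D 1)^d = 1" unfolding sc_pow by simp
    hence "sc (-1) * (D 1)^d = 1" unfolding ud by simp
    hence "- ((D 1)^d) = 1" by (simp add: sc_minus)
    thus ?thesis by (simp add: minus_equation_iff)
  qed
  have hE1: "(E 1)^d = 1"
  proof -
    have "Abs_cm (Cop2 d B1 B2 (d - 1) ** Cop2 d B1 B2 1) = Abs_cm (mat 1)"
      using assms(9)[of 1] assms(1) by simp
    hence "Abs_cm (mpow (Cop2 d B1 B2 1) (d - 1)) * Abs_cm (Cop2 d B1 B2 1) = 1"
      unfolding Abs_times Abs_one using assms(7)[OF d1 order_refl] by simp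
    hence "(Abs_cm (Cop2 d B1 B2 1))^d = 1"
      unfolding Abs_mpow by (subst dS) (simp only: power_Suc2)
    thus ?thesis unfolding C2 .
  qed
  have iu: "(1/u)^d = - \<i>" using ud by (simp add: power_one_over)
  have PdX: "P^d = sc (- \<i>) * X^d" unfolding P_def sc_pow iu ..
  have QdY: "Q^d = sc \<i> * Y^d" unfolding Q_def sc_pow ud ..
  have XY: "X^d + Y^d = 1 + 1"
  proof -
    have "D (d - 1) * D 1 - E (d - 1) * E 1 = sc (- \<i>) * (P^Suc (d - 1) - Q^Suc (d - 1))"
      unfolding D_def E_def by (rule DE_diff)
    also have "P^Suc (d - 1) - Q^Suc (d - 1) = P^d - Q^d" using dS by simp
    also have "D (d - 1) * D 1 - E (d - 1) * E 1 = (D 1)^d - (E 1)^d"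
      using hD[OF d1 order_refl] hE[OF d1 order_refl] by (subst (3 4) dS) (simp only: power_Suc2)
    finally have "-1 - 1 = sc (- \<i>) * (sc (- \<i>) * X^d - sc \<i> * Y^d)"
      unfolding hD1 hE1 PdX QdY .
    also have "\<dots> = sc (- \<i> * - \<i>) * X^d - sc (- \<i> * \<i>) * Y^d"
      by (simp only: right_diff_distrib sc_assoc)
    also have "\<dots> = - (X^d) - Y^d" by (simp add: sc_minus)
    finally show ?thesis by (simp add: algebra_simps)
  qed
  have aXd: "adj (X^d) * X^d = 1"
  proof -
    have "adj (X^d) = A1^d" unfolding adj_pow XA by simp
    thus ?thesis using pow_inv(1)[OF U1(1) U1(2), of d] by simp
  qed
  have aYd: "adj (Y^d) * Y^d = 1"
  proof -
    have "adj (Y^d) = A2^d" unfolding adj_pow YA by simp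
    thus ?thesis using pow_inv(1)[OF U2(1) U2(2), of d] by simp
  qed
  have Xd: "X^d = 1" by (rule unitary_sum[OF aXd aYd XY])
  have Yd: "Y^d = 1" by (rule unitary_sum[OF aYd aXd trans[OF add.commute XY]])
  have Pd: "P^d = sc (- \<i>)" using PdX Xd by simp
  have Qd: "Q^d = sc \<i>" using QdY Yd by simp
  have Dfull: "D j = (D 1)^j" if "1 \<le> j" "j \<le> d" for j
  proof (cases "j \<le> d - 1")
    case True thus ?thesis using that by (intro hD) auto
  next
    case False
    hence j: "j = d" using that by simp
    have "D d = sc (al * (-\<i>) + be * \<i>)" unfolding D_def Dm_def Pd Qd by (simp only: sc_mult sc_add)
    also have "\<dots> = -1" unfolding scal_facts by (simp add: sc_minus)
    finally show ?thesis using hD1 j by simp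
  qed
  have Efull: "E j = (E 1)^j" if "1 \<le> j" "j \<le> d" for j
  proof (cases "j \<le> d - 1")
    case True thus ?thesis using that by (intro hE) auto
  next
    case False
    hence j: "j = d" using that by simp
    have "E d = sc (be * (-\<i>) + al * \<i>)" unfolding E_def Dm_def Pd Qd by (simp only: sc_mult sc_add)
    also have "\<dots> = 1" unfolding scal_facts by simp
    finally show ?thesis using hE1 j by simp
  qed
  obtain m where dm: "d = n * m" using n by (auto elim: dvdE)
  have m2: "m \<ge> 2"
  proof -
    have "m \<noteq> 0" using dm d0 by auto
    moreover have "m \<noteq> 1" using dm n by auto
    ultimately show ?thesis by linarith
  qed
  define P' where "P' = P^n"
  define Q' where "Q' = Q^n"
  define Pi' where "Pi' = Pi^n"
  have DmP: "Dm a b P' Q' j = Dm a b P Q (n * j)" for a b j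
    unfolding Dm_def P'_def Q'_def power_mult ..
  have R': "P'^Suc k + Q'^Suc k = P'^k * Q' + Q'^k * P'" if k: "1 \<le> k" "k \<le> m - 1" for k
  proof -
    have sk: "Suc k \<le> m" using k m2 by linarith
    have n1: "1 \<le> n" using n by linarith
    have b1: "1 \<le> n * Suc k" "n * Suc k \<le> d"
    proof -
      show "1 \<le> n * Suc k" using n1 by simp
      show "n * Suc k \<le> d" unfolding dm using sk by (rule mult_le_mono2)
    qed
    have b2: "1 \<le> n * k" "n * k \<le> d"
    proof -
      show "1 \<le> n * k" using n1 k(1) by (simp add: Suc_le_eq)
      have "n * k \<le> n * Suc k" by (rule mult_le_mono2) simp
      thus "n * k \<le> d" using b1(2) by linarith
    qed
    have b3: "1 \<le> n * 1" "n * 1 \<le> d" using n by auto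
    have eD: "Dm al be P' Q' (Suc k) = Dm al be P' Q' k * Dm al be P' Q' 1"
    proof -
      have "Dm al be P' Q' (Suc k) = (D 1)^(n * k + n)"
        unfolding DmP D_def[symmetric] Dfull[OF b1] by (simp add: add.commute)
      also have "\<dots> = D (n * k) * D (n * 1)"
        unfolding power_add Dfull[OF b2] Dfull[OF b3] by simp
      finally show ?thesis unfolding DmP D_def .
    qed
    have eE: "Dm be al P' Q' (Suc k) = Dm be al P' Q' k * Dm be al P' Q' 1"
    proof -
      have "Dm be al P' Q' (Suc k) = (E 1)^(n * k + n)"
        unfolding DmP E_def[symmetric] Efull[OF b1] by (simp add: add.commute)
      also have "\<dots> = E (n * k) * E (n * 1)"
        unfolding power_add Efull[OF b2] Efull[OF b3] by simp
      finally show ?thesis unfolding DmP E_def .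
    qed
    have "P'^Suc k + Q'^Suc k = Dm al be P' Q' (Suc k) + Dm be al P' Q' (Suc k)"
      by (rule DE_add[symmetric])
    also have "\<dots> = P'^k * Q' + Q'^k * P'" unfolding eD eE by (rule DE_sum)
    finally show ?thesis .
  qed
  have Z': "P'^m + Q'^m = 0"
  proof -
    have "P'^m + Q'^m = P^d + Q^d" unfolding P'_def Q'_def dm power_mult ..
    also have "\<dots> = sc (- \<i> + \<i>)" unfolding Pd Qd sc_add ..
    finally show ?thesis by simp
  qed
  have PiP': "Pi' * P' = 1" "P' * Pi' = 1"
    unfolding Pi'_def P'_def using pow_inv[OF PiP PPi] by auto
  note cr = core[OF PiP'(1) PiP'(2) m2 R' Z']
  have trP: "tr P' = 0" by (rule trace_core(1)[OF PiP'(1) PiP'(2) cr])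
  have trQ: "tr Q' = 0" by (rule trace_core(2)[OF PiP'(1) PiP'(2) cr])
  have "tr P' = (1/u)^n * tr (X^n)" unfolding P'_def P_def sc_pow tr_sc ..
  hence tX: "tr (X^n) = 0" using trP unz by simp
  have "tr (Y^n) = 0"
  proof -
    have "tr Q' = u^n * tr (Y^n)" unfolding Q'_def Q_def sc_pow tr_sc ..
    thus ?thesis using trQ unz by simp
  qed
  hence tY: "tr (A2^n) = 0" unfolding YA adj_pow[symmetric] tr_adj by simp
  have tA1: "tr (A1^n) = 0" using tX unfolding XA adj_pow[symmetric] tr_adj by simp
  have "trace (mpow B1 n) = tr (A1^n)" unfolding tr_def Rep_mpow A1_def by (simp add: Abs_cm_inverse)
  moreover have "trace (mpow B2 n) = tr (A2^n)" unfolding tr_def Rep_mpow A2_def by (simp add: Abs_cm_inverse)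
  ultimately show "trace (mpow B1 n) = 0 \<and> trace (mpow B2 n) = 0" using tA1 tY by simp
qed


end
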